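(* Let $\mathcal{A}$ be a collection of hyperplanes in $Q = S_1\times\cdots\times S_n$, no two of which are parallel, let $0\le a\le n$, let $\mathbb{P}_a$ be a probability measure on $Q_a$, let $\delta_{a+1},\dots,\delta_n \in [0,1/2]$, and let $\mathbb{P}_k$, $\alpha_k$, $c_k$ be defined as in the context. Then for each $a < k \le n$, $$M_k^{(1)} \le \frac{c_{k-1}(1)}{|S_k|} \qquad\text{and}\qquad M_k^{(2)} \le \frac{c_{k-1}(3)}{|S_k|^2}.$$ Moreover, if in addition $|S_j| \ge 3$ for each $j\in[n]$, and no hyperplane $A_F$ with $F \in \mathcal{N}_k$ has $|F| = 1$, then $$M_k^{(2)} \le \frac{1}{|S_k|^2}\big(c_{k-1}(3) - 2c_{k-1}(1) + 1\big).$$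
   Context: $S_1,\dots,S_n$ are finite sets each with at least two elements; $Q = S_1\times\cdots\times S_n$ and $Q_k = S_1\times\cdots\times S_k$. A hyperplane is $A = A_1\times\cdots\times A_n\subseteq Q$ with each $A_k$ either $S_k$ or a singleton in $S_k$; $F(A)=\{k: A_k\text{ is a singleton}\}$ is its set of fixed coordinates; hyperplanes are parallel if they have the same $F$. Hyperplanes in $\mathcal{A}$ have non-empty $F(A)$; since no two are parallel, write $\mathcal{A}=\{A_F : F\in\mathcal{F}\}$ with $\mathcal{F}=\{F(A):A\in\mathcal{A}\}$. A set $X\subseteq Q_k$ is identified with $X\times S_{k+1}\times\cdots\times S_n\subseteq Q$ (such sets are called $Q_k$-measurable); a hyperplane with $F(A)\subseteq[k]$ is viewed as a subset of $Q_k$. Let $\mathcal{F}_k=\{F\in\mathcal{F}: F\subseteq[k]\}$, $\mathcal{N}_k = \mathcal{F}_k\setminus\mathcal{F}_{k-1}$ and $B_k = \bigcup_{F\in\mathcal{N}_k} A_F\subseteq Q_k$. Measures: given $\mathbb{P}_{k-1}$ on $Q_{k-1}$ ($k>a$), for $x\in Q_{k-1}$ let $\alpha_k(x) = |\{y\in S_k : (x,y)\in B_k\}|/|S_k|$, and for $x\in Q_{k-1}, y\in S_k$ set $\mathbb{P}_k(x,y) = \max\{0, \frac{\alpha_k(x)-\delta_k}{\alpha_k(x)(1-\delta_k)}\}\cdot \frac{\mathbb{P}_{k-1}(x)}{|S_k|}$ if $(x,y)\in B_k$, and $\mathbb{P}_k(x,y)=\min\{\frac{1}{1-\alpha_k(x)},\frac{1}{1-\delta_k}\}\cdot\frac{\mathbb{P}_{k-1}(x)}{|S_k|}$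 otherwise. Let $\mathbb{E}_{k-1}$ denote expectation over $x\sim\mathbb{P}_{k-1}$, and $M_k^{(1)}=\mathbb{E}_{k-1}[\alpha_k(x)]$, $M_k^{(2)}=\mathbb{E}_{k-1}[\alpha_k(x)^2]$. For $I\subseteq[a]$, $c(I)=\max\{\mathbb{P}_a(H): H \text{ a hyperplane in } Q_a \text{ with } F(H)=I\}$ (so $c(\emptyset)=1$); for $J\subseteq[a+1,n]$, $\nu(J)=\prod_{j\in J}\frac{1}{(1-\delta_j)|S_j|}$; and for $k\ge a$, $c_k(x) = \sum_{I\subseteq[a]}c(I)x^{|I|}\prod_{j=a+1}^k\big(1+\frac{x}{(1-\delta_j)|S_j|}\big)$. *)

theory Defs
  imports Complex_Main "HOL-Library.FuncSet"
begin

text \<open>Points of Q_k = S_1 x ... x S_k are functions nat => 'a that lie in S i for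
 i in {1..k} and are undefined elsewhere (PiE). A set X of Q_k is identified with
 X x S_{k+1} x ... x S_n. A family of pairwise non-parallel hyperplanes is given by the
 family Fs of fixed-coordinate sets together with A :: nat set => nat => 'a, where
 A F i is the fixed value of A_F at coordinate i in F.\<close>

definition Qk :: "(nat \<Rightarrow> 'a set) \<Rightarrow> nat \<Rightarrow> (nat \<Rightarrow> 'a) set" where
  "Qk S k = PiE {1..k} S"

definition inHyp :: "(nat set \<Rightarrow> nat \<Rightarrow> 'a) \<Rightarrow> nat set \<Rightarrow> (nat \<Rightarrow> 'a) \<Rightarrow> bool" where
  "inHyp A F x = (\<forall>i\<in>F. x i = A F i)"

definition Fk :: "nat set set \<Rightarrow> nat \<Rightarrow> nat set set" where
  "Fk Fs k = {F \<in> Fs. F \<subseteq> {1..k}}"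

definition Nk :: "nat set set \<Rightarrow> nat \<Rightarrow> nat set set" where
  "Nk Fs k = Fk Fs k - Fk Fs (k - 1)"

definition Bk :: "(nat \<Rightarrow> 'a set) \<Rightarrow> (nat set \<Rightarrow> nat \<Rightarrow> 'a) \<Rightarrow> nat set set \<Rightarrow> nat
    \<Rightarrow> (nat \<Rightarrow> 'a) set" where
  "Bk S A Fs k = {x \<in> Qk S k. \<exists>F\<in>Nk Fs k. inHyp A F x}"

definition alpha :: "(nat \<Rightarrow> 'a set) \<Rightarrow> (nat set \<Rightarrow> nat \<Rightarrow> 'a) \<Rightarrow> nat set set \<Rightarrow> nat
    \<Rightarrow> (nat \<Rightarrow> 'a) \<Rightarrow> real" where
  "alpha S A Fs k x =
     real (card {y \<in> S k. x(k := y) \<in> Bk S A Fs k}) / real (card (S k))"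

text \<open>Pmeas ... m is the measure P_{a+m} on Q_{a+m}; Pmeas ... 0 = P_a = P.
 For x in Q_k, the point x(k := undefined) is its projection to Q_{k-1}.\<close>
primrec Pmeas :: "(nat \<Rightarrow> 'a set) \<Rightarrow> (nat set \<Rightarrow> nat \<Rightarrow> 'a) \<Rightarrow> nat set set \<Rightarrow> nat
    \<Rightarrow> ((nat \<Rightarrow> 'a) \<Rightarrow> real) \<Rightarrow> (nat \<Rightarrow> real) \<Rightarrow> nat \<Rightarrow> (nat \<Rightarrow> 'a) \<Rightarrow> real" where
  "Pmeas S A Fs a P \<delta> 0 x = P x"
| "Pmeas S A Fs a P \<delta> (Suc m) x =
     (let k = a + Suc m;
          x' = x(k := undefined);
          al = alpha S A Fs k x';
          base = Pmeas S A Fs a P \<delta> m x' / real (card (S k))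
      in if x \<in> Bk S A Fs k
         then max 0 ((al - \<delta> k) / (al * (1 - \<delta> k))) * base
         else min (1 / (1 - al)) (1 / (1 - \<delta> k)) * base)"

definition Pk :: "(nat \<Rightarrow> 'a set) \<Rightarrow> (nat set \<Rightarrow> nat \<Rightarrow> 'a) \<Rightarrow> nat set set \<Rightarrow> nat
    \<Rightarrow> ((nat \<Rightarrow> 'a) \<Rightarrow> real) \<Rightarrow> (nat \<Rightarrow> real) \<Rightarrow> nat \<Rightarrow> (nat \<Rightarrow> 'a) \<Rightarrow> real" where
  "Pk S A Fs a P \<delta> k x = Pmeas S A Fs a P \<delta> (k - a) x"

definition M1 :: "(nat \<Rightarrow> 'a set) \<Rightarrow> (nat set \<Rightarrow> nat \<Rightarrow> 'a) \<Rightarrow> nat set set \<Rightarrow> nat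
    \<Rightarrow> ((nat \<Rightarrow> 'a) \<Rightarrow> real) \<Rightarrow> (nat \<Rightarrow> real) \<Rightarrow> nat \<Rightarrow> real" where
  "M1 S A Fs a P \<delta> k =
     (\<Sum>x\<in>Qk S (k - 1). Pk S A Fs a P \<delta> (k - 1) x * alpha S A Fs k x)"

definition M2 :: "(nat \<Rightarrow> 'a set) \<Rightarrow> (nat set \<Rightarrow> nat \<Rightarrow> 'a) \<Rightarrow> nat set set \<Rightarrow> nat
    \<Rightarrow> ((nat \<Rightarrow> 'a) \<Rightarrow> real) \<Rightarrow> (nat \<Rightarrow> real) \<Rightarrow> nat \<Rightarrow> real" where
  "M2 S A Fs a P \<delta> k =
     (\<Sum>x\<in>Qk S (k - 1). Pk S A Fs a P \<delta> (k - 1) x * (alpha S A Fs k x)^2)"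

definition cI :: "(nat \<Rightarrow> 'a set) \<Rightarrow> nat \<Rightarrow> ((nat \<Rightarrow> 'a) \<Rightarrow> real) \<Rightarrow> nat set \<Rightarrow> real" where
  "cI S a P I = Max ((\<lambda>v. \<Sum>x\<in>{x \<in> Qk S a. \<forall>i\<in>I. x i = v i}. P x) ` PiE I S)"

definition ck :: "(nat \<Rightarrow> 'a set) \<Rightarrow> nat \<Rightarrow> ((nat \<Rightarrow> 'a) \<Rightarrow> real) \<Rightarrow> (nat \<Rightarrow> real)
    \<Rightarrow> nat \<Rightarrow> real \<Rightarrow> real" where
  "ck S a P \<delta> k t = (\<Sum>I\<in>Pow {1..a}. cI S a P I * t ^ card I *
      (\<Prod>j\<in>{a+1..k}. (1 + t / ((1 - \<delta> j) * real (card (S j))))))"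

end

theory Submission
  imports Defs
begin


lemma sum_Pow_insert:
  assumes "finite A" "x \<notin> A"
  shows "(\<Sum>X\<in>Pow (insert x A). h X) = (\<Sum>X\<in>Pow A. h X) + (\<Sum>X\<in>Pow A. h (insert x X))"
proof -
  have "(\<Sum>X\<in>Pow (insert x A). h X) = (\<Sum>X\<in>Pow A. h X) + (\<Sum>X\<in>insert x ` Pow A. h X)"
    unfolding Pow_insert by (rule sum.union_disjoint) (use assms in auto)
  also have "(\<Sum>X\<in>insert x ` Pow A. h X) = (\<Sum>X\<in>Pow A. h (insert x X))"
  proof (rule sum.reindex[unfolded comp_def])
    show "inj_on (insert x) (Pow A)"
    proof (rule inj_onI)
      fix X Y assume "X \<in> Pow A" "Y \<in> Pow A" "insert x X = insert x Y"
      then show "X = Y" using assms by (metis PowD insert_ident subsetD)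
    qed
  qed
  finally show ?thesis .
qed

lemma sum_pairs_Pow:
  fixes f :: "'b set \<Rightarrow> real"
  assumes "finite A"
  shows "(\<Sum>G\<in>Pow A. \<Sum>G'\<in>Pow A. f (G \<union> G')) = (\<Sum>U\<in>Pow A. 3 ^ card U * f U)"
  using assms
proof (induction A arbitrary: f rule: finite_induct)
  case empty
  then show ?case by simp
next
  case (insert x A)
  let ?f' = "\<lambda>U. f (insert x U)"
  let ?S = "\<lambda>h. (\<Sum>G\<in>Pow A. \<Sum>G'\<in>Pow A. h (G \<union> G'))"
  have e1: "(\<Sum>G'\<in>Pow (insert x A). f (G \<union> G')) = (\<Sum>G'\<in>Pow A. f (G \<union> G')) + (\<Sum>G'\<in>Pow A. ?f' (G \<union> G'))" for G
    using sum_Pow_insert[OF insert.hyps, of "\<lambda>G'. f (G \<union> G')"] by simp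
  have e2: "(\<Sum>G\<in>Pow (insert x A). h G) = (\<Sum>G\<in>Pow A. h G) + (\<Sum>G\<in>Pow A. h (insert x G))" for h :: "'b set \<Rightarrow> real"
    using sum_Pow_insert[OF insert.hyps] .
  have e3: "(\<Sum>G'\<in>Pow (insert x A). f (insert x G \<union> G')) = 2 * (\<Sum>G'\<in>Pow A. ?f' (G \<union> G'))" for G
    using sum_Pow_insert[OF insert.hyps, of "\<lambda>G'. f (insert x G \<union> G')"] by simp
  have "(\<Sum>G\<in>Pow (insert x A). \<Sum>G'\<in>Pow (insert x A). f (G \<union> G'))
      = (\<Sum>G\<in>Pow A. \<Sum>G'\<in>Pow (insert x A). f (G \<union> G')) + (\<Sum>G\<in>Pow A. \<Sum>G'\<in>Pow (insert x A). f (insert x G \<union> G'))"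
    by (rule e2)
  also have "\<dots> = ?S f + ?S ?f' + 2 * ?S ?f'"
    by (simp only: e3, simp only: e1 sum.distrib sum_distrib_left)
  also have "\<dots> = ?S f + 3 * ?S ?f'" by simp
  finally have "(\<Sum>G\<in>Pow (insert x A). \<Sum>G'\<in>Pow (insert x A). f (G \<union> G'))
      = ?S f + 3 * ?S ?f'" .
  also have "\<dots> = (\<Sum>U\<in>Pow A. 3 ^ card U * f U) + 3 * (\<Sum>U\<in>Pow A. 3 ^ card U * ?f' U)"
    using insert.IH by simp
  also have "\<dots> = (\<Sum>U\<in>Pow (insert x A). 3 ^ card U * f U)"
  proof -
    have "\<And>U. U \<in> Pow A \<Longrightarrow> card (insert x U) = Suc (card U)"
      using insert.hyps by (meson PowD card_insert_disjoint finite_subset subsetD)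
    then have "(\<Sum>U\<in>Pow A. 3 ^ card (insert x U) * f (insert x U)) = 3 * (\<Sum>U\<in>Pow A. 3 ^ card U * ?f' U)"
      by (simp add: sum_distrib_left mult.assoc)
    then show ?thesis using insert.hyps by (simp add: sum_Pow_insert)
  qed
  finally show ?case .
qed

lemma sum_Pow_Un:
  assumes "A \<inter> B = {}"
  shows "(\<Sum>U\<in>Pow (A \<union> B). g U) = (\<Sum>I\<in>Pow A. \<Sum>J\<in>Pow B. g (I \<union> J))"
proof -
  let ?f = "\<lambda>p. fst p \<union> snd p"
  have eq: "Pow (A \<union> B) = ?f ` (Pow A \<times> Pow B)"
  proof
    show "Pow (A \<union> B) \<subseteq> ?f ` (Pow A \<times> Pow B)"
    proof
      fix U assume "U \<in> Pow (A \<union> B)"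
      then have "U = ?f (U \<inter> A, U \<inter> B)" "(U \<inter> A, U \<inter> B) \<in> Pow A \<times> Pow B" by auto
      then show "U \<in> ?f ` (Pow A \<times> Pow B)" by (rule image_eqI)
    qed
    show "?f ` (Pow A \<times> Pow B) \<subseteq> Pow (A \<union> B)" by auto
  qed
  have inj: "inj_on ?f (Pow A \<times> Pow B)"
  proof (rule inj_onI)
    fix p q assume p: "p \<in> Pow A \<times> Pow B" and q: "q \<in> Pow A \<times> Pow B" and e: "?f p = ?f q"
    have "fst p = ?f p \<inter> A" "snd p = ?f p \<inter> B" using p assms by auto
    moreover have "fst q = ?f q \<inter> A" "snd q = ?f q \<inter> B" using q assms by auto
    ultimately show "p = q" using e by (simp add: prod_eq_iff)
  qed
  have "(\<Sum>U\<in>Pow (A \<union> B). g U) = (\<Sum>p\<in>Pow A \<times> Pow B. g (?f p))"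
    unfolding eq by (rule sum.reindex[OF inj, unfolded comp_def])
  also have "\<dots> = (\<Sum>I\<in>Pow A. \<Sum>J\<in>Pow B. g (I \<union> J))"
    by (simp add: sum.cartesian_product case_prod_unfold)
  finally show ?thesis .
qed

lemma sum_Pow_prod:
  fixes g :: "'b \<Rightarrow> real"
  assumes "finite R"
  shows "(\<Sum>J\<in>Pow R. \<Prod>j\<in>J. g j) = (\<Prod>j\<in>R. 1 + g j)"
  using prod_add[OF assms, of g "\<lambda>_. 1"] by (simp add: add.commute)




definition fac :: "real \<Rightarrow> real \<Rightarrow> bool \<Rightarrow> real" where
  "fac al d inB = (if inB then max 0 ((al - d) / (al * (1 - d))) else min (1 / (1 - al)) (1 / (1 - d)))"

lemma fac_nonneg: "0 \<le> al \<Longrightarrow> al \<le> 1 \<Longrightarrow> d < 1 \<Longrightarrow> 0 \<le> fac al d b"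
  by (auto simp: fac_def)

lemma fac_le: assumes "0 \<le> al" "al \<le> 1" "0 \<le> d" "d < 1" shows "fac al d b \<le> 1 / (1 - d)"
proof (cases b)
  case True
  have "(al - d) / (al * (1 - d)) \<le> 1 / (1 - d)"
  proof (cases "al = 0")
    case False
    then have "(al - d) / (al * (1 - d)) = ((al - d) / al) / (1 - d)" by simp
    also have "\<dots> \<le> 1 / (1 - d)"
      using assms False by (intro divide_right_mono) (auto simp: divide_le_eq)
    finally show ?thesis .
  qed (use assms in simp)
  then show ?thesis using True assms by (simp add: fac_def)
qed (simp add: fac_def)

lemma fac_sum:
  assumes c: "c > (0::nat)" and b: "b \<le> c" and d: "0 \<le> d" "d \<le> 1/2"
  shows "real b * fac (real b / real c) d True + real (c - b) * fac (real b / real c) d False \<le> real c"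
proof -
  define al where "al = real b / real c"
  have al: "0 \<le> al" "al \<le> 1" using b c by (auto simp: al_def)
  have cb: "real (c - b) = real c * (1 - al)" using b c by (simp add: al_def of_nat_diff field_simps)
  have bb: "real b = real c * al" using c by (simp add: al_def)
  have key: "al * fac al d True + (1 - al) * fac al d False \<le> 1"
  proof -
    consider "al = 0" | "al = 1" | "0 < al" "al < 1" "al \<le> d" | "0 < al" "al < 1" "d < al"
      using al by linarith
    then show ?thesis
    proof cases
      case 1 then show ?thesis using d by (simp add: fac_def)
    next
      case 2 then show ?thesis using d by (simp add: fac_def)
    next
      case 3
      then have "fac al d True = 0" using d by (simp add: fac_def divide_nonpos_pos)
      moreover have "(1 - al) * fac al d False \<le> (1 - al) * (1 / (1 - al))"
        using 3 by (intro mult_left_mono) (auto simp: fac_def)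
      ultimately show ?thesis using 3 by simp
    next
      case 4
      then have "fac al d True = (al - d) / (al * (1 - d))" using d by (simp add: fac_def)
      then have t: "al * fac al d True = (al - d) / (1 - d)" using 4 d by simp
      have "(1 - al) * fac al d False \<le> (1 - al) * (1 / (1 - d))"
        using 4 by (intro mult_left_mono) (auto simp: fac_def)
      then have "al * fac al d True + (1 - al) * fac al d False \<le> (al - d) / (1 - d) + (1 - al) / (1 - d)"
        using t by simp
      also have "\<dots> = 1" using d by (simp add: field_simps)
      finally show ?thesis .
    qed
  qed
  have "real b * fac al d True + real (c - b) * fac al d False
      = real c * (al * fac al d True + (1 - al) * fac al d False)"
    unfolding cb bb by (simp add: algebra_simps)
  also have "\<dots> \<le> real c * 1" using key c by (intro mult_left_mono) auto
  finally show ?thesis by (simp add: al_def)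
qed


lemma Qk_Suc_eq: "Qk S (Suc j) = (\<lambda>(y,g). g(Suc j := y)) ` (S (Suc j) \<times> Qk S j)"
  by (simp add: Qk_def atLeastAtMostSuc_conv PiE_insert_eq)

lemma sum_Qk_Suc:
  "(\<Sum>x\<in>Qk S (Suc j). h x) = (\<Sum>x'\<in>Qk S j. \<Sum>y\<in>S (Suc j). h (x'(Suc j := y)))"
proof -
  have inj: "inj_on (\<lambda>(y,g). g(Suc j := y)) (S (Suc j) \<times> Qk S j)"
    unfolding Qk_def by (rule inj_combinator) simp
  have "(\<Sum>x\<in>Qk S (Suc j). h x) = (\<Sum>p\<in>S (Suc j) \<times> Qk S j. h ((snd p)(Suc j := fst p)))"
    unfolding Qk_Suc_eq by (subst sum.reindex[OF inj]) (auto simp: case_prod_beta intro!: sum.cong)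
  also have "\<dots> = (\<Sum>y\<in>S (Suc j). \<Sum>x'\<in>Qk S j. h (x'(Suc j := y)))"
    unfolding sum.cartesian_product by (simp add: case_prod_beta)
  also have "\<dots> = (\<Sum>x'\<in>Qk S j. \<Sum>y\<in>S (Suc j). h (x'(Suc j := y)))"
    by (rule sum.swap)
  finally show ?thesis .
qed

lemma Qk_undef: "x \<in> Qk S j \<Longrightarrow> i \<notin> {1..j} \<Longrightarrow> x i = undefined"
  by (auto simp: Qk_def PiE_def extensional_def)

lemma Qk_in: "x \<in> Qk S j \<Longrightarrow> i \<in> {1..j} \<Longrightarrow> x i \<in> S i"
  by (auto simp: Qk_def PiE_def)

lemma alpha_bounds: "finite (S k) \<Longrightarrow> 0 \<le> alpha S A Fs k x \<and> alpha S A Fs k x \<le> 1"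
  unfolding alpha_def
  by (auto intro!: divide_le_eq_1_pos[THEN iffD2] card_mono simp: divide_le_eq_1 card_mono)


lemma Pmeas_Suc_eq:
  assumes "x' \<in> Qk S (a+m)"
  shows "Pmeas S A Fs a P \<delta> (Suc m) (x'(Suc (a+m) := y)) =
    fac (alpha S A Fs (Suc (a+m)) x') (\<delta> (Suc (a+m))) (x'(Suc (a+m) := y) \<in> Bk S A Fs (Suc (a+m)))
    * (Pmeas S A Fs a P \<delta> m x' / real (card (S (Suc (a+m)))))"
proof -
  have "x' (Suc (a+m)) = undefined" using Qk_undef[OF assms] by simp
  then have e: "(x'(Suc (a+m) := y))(Suc (a+m) := undefined) = x'" by (intro ext) simp
  have s: "a + Suc m = Suc (a+m)" by simp
  show ?thesis
    unfolding fac_def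
    by (cases "x'(Suc (a+m) := y) \<in> Bk S A Fs (Suc (a+m))") (simp_all only: Pmeas.simps Let_def s e if_True if_False)
qed


declare Pmeas.simps(2)[simp del]

definition wt :: "(nat \<Rightarrow> 'a set) \<Rightarrow> nat \<Rightarrow> ((nat \<Rightarrow> 'a) \<Rightarrow> real) \<Rightarrow> (nat \<Rightarrow> real) \<Rightarrow> nat set \<Rightarrow> real" where
  "wt S a P \<delta> G = cI S a P (G \<inter> {1..a}) * (\<Prod>j\<in>G - {1..a}. 1 / ((1 - \<delta> j) * real (card (S j))))"

lemma finite_Qk: "(\<forall>i\<in>{1..j}. finite (S i)) \<Longrightarrow> finite (Qk S j)"
  unfolding Qk_def by (intro finite_PiE) auto

context
  fixes S :: "nat \<Rightarrow> 'a set" and A :: "nat set \<Rightarrow> nat \<Rightarrow> 'a" and Fs :: "nat set set"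
    and n a :: nat and P :: "(nat \<Rightarrow> 'a) \<Rightarrow> real" and \<delta> :: "nat \<Rightarrow> real"
  assumes S_fin: "\<forall>i\<in>{1..n}. finite (S i) \<and> card (S i) \<ge> 2"
    and a_le: "a \<le> n"
    and P_nonneg: "\<forall>x\<in>Qk S a. P x \<ge> 0"
    and P_sum: "(\<Sum>x\<in>Qk S a. P x) = 1"
    and delta: "\<forall>j\<in>{a+1..n}. 0 \<le> \<delta> j \<and> \<delta> j \<le> 1/2"
begin

lemma kk_facts:
  assumes "a + Suc m \<le> n"
  shows "finite (S (Suc (a+m)))" "card (S (Suc (a+m))) \<ge> 2" "0 \<le> \<delta> (Suc (a+m))" "\<delta> (Suc (a+m)) \<le> 1/2"
  using S_fin delta assms by auto

lemma Pm_nonneg: "a + m \<le> n \<Longrightarrow> x \<in> Qk S (a+m) \<Longrightarrow> 0 \<le> Pmeas S A Fs a P \<delta> m x"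
proof (induction m arbitrary: x)
  case 0 thus ?case using P_nonneg by simp
next
  case (Suc m)
  have "x \<in> Qk S (Suc (a+m))" using Suc.prems by simp
  then obtain y x' where x: "x = x'(Suc(a+m) := y)" "x' \<in> Qk S (a+m)" "y \<in> S (Suc(a+m))"
    unfolding Qk_Suc_eq by auto
  note kk = kk_facts[OF Suc.prems(1)]
  have "0 \<le> Pmeas S A Fs a P \<delta> m x'" using Suc.IH[OF _ x(2)] Suc.prems(1) by simp
  moreover have "0 \<le> fac (alpha S A Fs (Suc (a+m)) x') (\<delta> (Suc (a+m))) b" for b
    using alpha_bounds[where S=S and k="Suc (a+m)", OF kk(1)] kk by (intro fac_nonneg) auto
  ultimately show ?case unfolding x(1) Pmeas_Suc_eq[OF x(2)]
    by (auto intro!: mult_nonneg_nonneg divide_nonneg_nonneg)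
qed

lemma Pm_step_le:
  assumes "a + Suc m \<le> n" "x' \<in> Qk S (a+m)"
  shows "Pmeas S A Fs a P \<delta> (Suc m) (x'(Suc (a+m) := y))
     \<le> Pmeas S A Fs a P \<delta> m x' * (1 / ((1 - \<delta> (Suc (a+m))) * real (card (S (Suc (a+m))))))"
proof -
  note kk = kk_facts[OF assms(1)]
  have p: "0 \<le> Pmeas S A Fs a P \<delta> m x' / real (card (S (Suc (a+m))))"
    using Pm_nonneg[OF _ assms(2)] assms(1) by simp
  have "fac (alpha S A Fs (Suc (a+m)) x') (\<delta> (Suc (a+m))) b \<le> 1 / (1 - \<delta> (Suc (a+m)))" for b
    using alpha_bounds[where S=S and k="Suc (a+m)", OF kk(1)] kk by (intro fac_le) auto
  then have "Pmeas S A Fs a P \<delta> (Suc m) (x'(Suc (a+m) := y))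
     \<le> 1 / (1 - \<delta> (Suc (a+m))) * (Pmeas S A Fs a P \<delta> m x' / real (card (S (Suc (a+m)))))"
    unfolding Pmeas_Suc_eq[OF assms(2)] by (intro mult_right_mono p)
  then show ?thesis by simp
qed

lemma Pm_sum_le:
  assumes "a + Suc m \<le> n" "x' \<in> Qk S (a+m)"
  shows "(\<Sum>y\<in>S (Suc (a+m)). Pmeas S A Fs a P \<delta> (Suc m) (x'(Suc (a+m) := y))) \<le> Pmeas S A Fs a P \<delta> m x'"
proof -
  note kk = kk_facts[OF assms(1)]
  define k where "k = Suc (a+m)"
  define Q where "Q y \<longleftrightarrow> x'(k := y) \<in> Bk S A Fs k" for y
  define c where "c = card (S k)"
  define b where "b = card {y \<in> S k. Q y}"
  define al where "al = alpha S A Fs k x'"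
  define d where "d = \<delta> k"
  define base where "base = Pmeas S A Fs a P \<delta> m x' / real c"
  have fin: "finite (S k)" and c2: "c \<ge> 2" and d: "0 \<le> d" "d \<le> 1/2"
    using kk by (auto simp: k_def c_def d_def)
  have al: "al = real b / real c" unfolding al_def alpha_def b_def c_def Q_def by simp
  have bc: "b \<le> c" unfolding b_def c_def using fin by (intro card_mono) auto
  have base: "0 \<le> base" using Pm_nonneg[OF _ assms(2)] assms(1) by (simp add: base_def)
  have "(\<Sum>y\<in>S k. Pmeas S A Fs a P \<delta> (Suc m) (x'(k := y))) = (\<Sum>y\<in>S k. fac al d (Q y) * base)"
    unfolding k_def using Pmeas_Suc_eq[OF assms(2)]
    by (simp add: k_def Q_def al_def d_def base_def c_def)
  also have "\<dots> = (\<Sum>y\<in>S k. if Q y then fac al d True * base else fac al d False * base)"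
    by (intro sum.cong) auto
  also have "\<dots> = real (card (S k \<inter> {y. Q y})) * (fac al d True * base) + real (card (S k \<inter> - {y. Q y})) * (fac al d False * base)"
    using fin by (simp add: sum.If_cases)
  also have "card (S k \<inter> {y. Q y}) = b" unfolding b_def by (rule arg_cong[where f=card]) auto
  also have "S k \<inter> - {y. Q y} = S k - {y \<in> S k. Q y}" by auto
  also have "card (S k - {y \<in> S k. Q y}) = c - b" unfolding b_def c_def using fin by (subst card_Diff_subset) auto
  also have "real b * (fac al d True * base) + real (c - b) * (fac al d False * base)
      = (real b * fac al d True + real (c - b) * fac al d False) * base" by (simp add: algebra_simps)
  also have "\<dots> \<le> real c * base"
    using fac_sum[of c b d] c2 bc d base al by (intro mult_right_mono) auto
  also have "\<dots> = Pmeas S A Fs a P \<delta> m x'" using c2 by (simp add: base_def)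
  finally show ?thesis unfolding k_def .
qed


lemma cI_ge:
  assumes "I \<subseteq> {1..a}" "v \<in> PiE I S"
  shows "(\<Sum>x\<in>{x \<in> Qk S a. \<forall>i\<in>I. x i = v i}. P x) \<le> cI S a P I"
  unfolding cI_def
proof (rule Max_ge)
  have "finite I" using assms(1) finite_subset by blast
  moreover have "\<forall>i\<in>I. finite (S i)" using assms(1) S_fin a_le by auto
  ultimately show "finite ((\<lambda>v. \<Sum>x\<in>{x \<in> Qk S a. \<forall>i\<in>I. x i = v i}. P x) ` PiE I S)"
    by (intro finite_imageI finite_PiE) auto
qed (use assms in auto)

lemma cI_nonneg:
  assumes "I \<subseteq> {1..a}"
  shows "0 \<le> cI S a P I"
proof -
  have "\<forall>i\<in>I. S i \<noteq> {}"
  proof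
    fix i assume "i \<in> I"
    then have "finite (S i)" "card (S i) \<ge> 2" using assms S_fin a_le by auto
    then show "S i \<noteq> {}" by auto
  qed
  then have "PiE I S \<noteq> {}" by (simp add: PiE_eq_empty_iff)
  then obtain v where v: "v \<in> PiE I S" by blast
  have "0 \<le> (\<Sum>x\<in>{x \<in> Qk S a. \<forall>i\<in>I. x i = v i}. P x)"
    using P_nonneg by (intro sum_nonneg) auto
  also have "\<dots> \<le> cI S a P I" by (rule cI_ge[OF assms v])
  finally show ?thesis .
qed

lemma cI_empty: "cI S a P {} = 1"
  unfolding cI_def using P_sum by simp

lemma wt_nonneg:
  assumes "G \<subseteq> {1..n}"
  shows "0 \<le> wt S a P \<delta> G"
  unfolding wt_def
proof (intro mult_nonneg_nonneg prod_nonneg cI_nonneg)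
  fix j assume "j \<in> G - {1..a}"
  then have "j \<in> {a+1..n}" using assms by auto
  then have "\<delta> j \<le> 1/2" using delta by blast
  then have "0 \<le> 1 - \<delta> j" by simp
  then show "0 \<le> 1 / ((1 - \<delta> j) * real (card (S j)))" by simp
qed auto

lemma wt_empty: "wt S a P \<delta> {} = 1"
  by (simp add: wt_def cI_empty)

lemma L1:
  "a + m \<le> n \<Longrightarrow> G \<subseteq> {1..a+m} \<Longrightarrow>
   (\<Sum>x\<in>{x \<in> Qk S (a+m). \<forall>i\<in>G. x i = v i}. Pmeas S A Fs a P \<delta> m x) \<le> wt S a P \<delta> G"
proof (induction m arbitrary: G)
  case 0
  then have G: "G \<subseteq> {1..a}" by simp
  have e: "G \<inter> {1..a} = G" "G - {1..a} = {}" using G by auto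
  have w: "wt S a P \<delta> G = cI S a P G" unfolding wt_def e by simp
  have "(\<Sum>x\<in>{x \<in> Qk S a. \<forall>i\<in>G. x i = v i}. P x) \<le> cI S a P G"
  proof (cases "\<forall>i\<in>G. v i \<in> S i")
    case True
    then have r: "restrict v G \<in> PiE G S" by auto
    have "{x \<in> Qk S a. \<forall>i\<in>G. x i = v i} = {x \<in> Qk S a. \<forall>i\<in>G. x i = restrict v G i}" by auto
    then show ?thesis using cI_ge[OF G r] by simp
  next
    case False
    then obtain i where i: "i \<in> G" "v i \<notin> S i" by blast
    have xi: "x i \<in> S i" if "x \<in> Qk S a" for x using Qk_in[OF that, of i] i G by auto
    have e: "{x \<in> Qk S a. \<forall>i\<in>G. x i = v i} = {}"
      using i xi by fastforce
    show ?thesis unfolding e using cI_nonneg[OF G] by simp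
  qed
  then show ?case using w by simp
next
  case (Suc m)
  define kk where "kk = Suc (a+m)"
  define M where "M G x \<longleftrightarrow> (\<forall>i\<in>G. x i = v i)" for G and x :: "nat \<Rightarrow> 'a"
  have le: "a + m \<le> n" using Suc.prems by simp
  have finS: "\<forall>i\<in>{1..a+Suc m}. finite (S i)" using S_fin Suc.prems by auto
  have finQ: "finite (Qk S (Suc (a+m)))" using finite_Qk[OF finS] by simp
  have finkk: "finite (S kk)" using finS by (auto simp: kk_def)
  have "(\<Sum>x\<in>{x \<in> Qk S (a + Suc m). \<forall>i\<in>G. x i = v i}. Pmeas S A Fs a P \<delta> (Suc m) x)
      = (\<Sum>x\<in>Qk S (Suc (a+m)). if M G x then Pmeas S A Fs a P \<delta> (Suc m) x else 0)"
    using finQ by (simp add: sum.inter_filter M_def)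
  also have "\<dots> = (\<Sum>x'\<in>Qk S (a+m). \<Sum>y\<in>S kk. if M G (x'(kk := y)) then Pmeas S A Fs a P \<delta> (Suc m) (x'(kk := y)) else 0)"
    unfolding kk_def by (rule sum_Qk_Suc)
  also have "\<dots> \<le> wt S a P \<delta> G"
  proof (cases "kk \<in> G")
    case True
    define G' where "G' = G - {kk}"
    define s where "s = 1 / ((1 - \<delta> kk) * real (card (S kk)))"
    have G': "G' \<subseteq> {1..a+m}" using Suc.prems True by (auto simp: G'_def kk_def)
    have s: "0 \<le> s" using kk_facts[OF Suc.prems(1)] by (simp add: s_def kk_def)
    have inner: "(\<Sum>y\<in>S kk. if M G (x'(kk := y)) then Pmeas S A Fs a P \<delta> (Suc m) (x'(kk := y)) else 0)
        \<le> (if M G' x' then Pmeas S A Fs a P \<delta> m x' * s else 0)" if x': "x' \<in> Qk S (a+m)" for x'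
    proof -
      have "(\<Sum>y\<in>S kk. if M G (x'(kk := y)) then Pmeas S A Fs a P \<delta> (Suc m) (x'(kk := y)) else 0)
          = (\<Sum>y\<in>S kk. if y = v kk then (if M G (x'(kk := y)) then Pmeas S A Fs a P \<delta> (Suc m) (x'(kk := y)) else 0) else 0)"
        using True by (intro sum.cong) (auto simp: M_def)
      also have "\<dots> = (if v kk \<in> S kk then (if M G (x'(kk := v kk)) then Pmeas S A Fs a P \<delta> (Suc m) (x'(kk := v kk)) else 0) else 0)"
        using finkk by (simp add: sum.delta)
      also have "\<dots> \<le> (if M G' x' then Pmeas S A Fs a P \<delta> m x' * s else 0)"
      proof -
        have nn: "0 \<le> Pmeas S A Fs a P \<delta> m x' * s" using Pm_nonneg[OF le x'] s by simp
        have "M G (x'(kk := v kk)) \<Longrightarrow> M G' x'" unfolding M_def G'_def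
          by (metis DiffD1 DiffD2 fun_upd_other singletonI)
        moreover have "Pmeas S A Fs a P \<delta> (Suc m) (x'(kk := v kk)) \<le> Pmeas S A Fs a P \<delta> m x' * s"
          unfolding kk_def s_def by (rule Pm_step_le[OF Suc.prems(1) x'])
        ultimately show ?thesis using nn by auto
      qed
      finally show ?thesis .
    qed
    have "(\<Sum>x'\<in>Qk S (a+m). \<Sum>y\<in>S kk. if M G (x'(kk := y)) then Pmeas S A Fs a P \<delta> (Suc m) (x'(kk := y)) else 0)
        \<le> (\<Sum>x'\<in>Qk S (a+m). if M G' x' then Pmeas S A Fs a P \<delta> m x' * s else 0)"
      by (rule sum_mono) (rule inner)
    also have "\<dots> = (\<Sum>x'\<in>{x \<in> Qk S (a+m). \<forall>i\<in>G'. x i = v i}. Pmeas S A Fs a P \<delta> m x') * s"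
      using finite_Qk[of "a+m" S] finS by (auto simp: sum.inter_filter M_def sum_distrib_right intro!: sum.cong)
    also have "\<dots> \<le> wt S a P \<delta> G' * s"
      by (rule mult_right_mono[OF Suc.IH[OF le G'] s])
    also have "\<dots> = wt S a P \<delta> G"
    proof -
      have "G \<inter> {1..a} = G' \<inter> {1..a}" by (auto simp: G'_def kk_def)
      moreover have "G - {1..a} = insert kk (G' - {1..a})" using True by (auto simp: G'_def kk_def)
      moreover have "finite (G' - {1..a})" using G' finite_subset by blast
      moreover have "kk \<notin> G' - {1..a}" by (simp add: G'_def)
      ultimately show ?thesis by (simp add: wt_def s_def mult_ac)
    qed
    finally show ?thesis .
  next
    case False
    have G: "G \<subseteq> {1..a+m}"
    proof
      fix x assume "x \<in> G"
      then have "x \<in> {1..a + Suc m}" "x \<noteq> kk" using Suc.prems False by auto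
      then show "x \<in> {1..a+m}" by (auto simp: kk_def)
    qed
    have inner: "(\<Sum>y\<in>S kk. if M G (x'(kk := y)) then Pmeas S A Fs a P \<delta> (Suc m) (x'(kk := y)) else 0)
        \<le> (if M G x' then Pmeas S A Fs a P \<delta> m x' else 0)" if x': "x' \<in> Qk S (a+m)" for x'
    proof -
      have "M G (x'(kk := y)) = M G x'" for y using False by (auto simp: M_def)
      then show ?thesis using Pm_sum_le[OF Suc.prems(1) x'] by (auto simp: kk_def)
    qed
    have "(\<Sum>x'\<in>Qk S (a+m). \<Sum>y\<in>S kk. if M G (x'(kk := y)) then Pmeas S A Fs a P \<delta> (Suc m) (x'(kk := y)) else 0)
        \<le> (\<Sum>x'\<in>Qk S (a+m). if M G x' then Pmeas S A Fs a P \<delta> m x' else 0)"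
      by (rule sum_mono) (rule inner)
    also have "\<dots> = (\<Sum>x'\<in>{x \<in> Qk S (a+m). \<forall>i\<in>G. x i = v i}. Pmeas S A Fs a P \<delta> m x')"
      using finite_Qk[of "a+m" S] finS by (simp add: sum.inter_filter M_def)
    also have "\<dots> \<le> wt S a P \<delta> G" by (rule Suc.IH[OF le G])
    finally show ?thesis .
  qed
  finally show ?case .
qed

end


lemma ck_eq:
  "(\<Sum>U\<in>Pow {1..a+m}. t ^ card U * wt S a P \<delta> U) = ck S a P \<delta> (a+m) t"
proof -
  define R where "R = {a+1..a+m}"
  define s where "s j = 1 / ((1 - \<delta> j) * real (card (S j)))" for j
  have un: "{1..a+m} = {1..a} \<union> R" unfolding R_def by auto
  have dis: "{1..a} \<inter> R = {}" unfolding R_def by auto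
  have "(\<Sum>U\<in>Pow {1..a+m}. t ^ card U * wt S a P \<delta> U)
      = (\<Sum>I\<in>Pow {1..a}. \<Sum>J\<in>Pow R. t ^ card (I \<union> J) * wt S a P \<delta> (I \<union> J))"
    unfolding un by (rule sum_Pow_Un[OF dis])
  also have "\<dots> = (\<Sum>I\<in>Pow {1..a}. cI S a P I * t ^ card I * (\<Sum>J\<in>Pow R. \<Prod>j\<in>J. t * s j))"
  proof (intro sum.cong refl)
    fix I assume I: "I \<in> Pow {1..a}"
    show "(\<Sum>J\<in>Pow R. t ^ card (I \<union> J) * wt S a P \<delta> (I \<union> J)) = cI S a P I * t ^ card I * (\<Sum>J\<in>Pow R. \<Prod>j\<in>J. t * s j)"
      unfolding sum_distrib_left
    proof (intro sum.cong refl)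
      fix J assume J: "J \<in> Pow R"
      have fI: "finite I" using I finite_subset by blast
      have fJ: "finite J" using J finite_subset unfolding R_def by blast
      have e1: "(I \<union> J) \<inter> {1..a} = I" "(I \<union> J) - {1..a} = J" using I J unfolding R_def by auto
      have e2: "card (I \<union> J) = card I + card J" using I J dis fI fJ by (intro card_Un_disjoint) auto
      have e3: "(\<Prod>j\<in>J. t * s j) = t ^ card J * (\<Prod>j\<in>J. s j)" by (simp add: prod.distrib)
      show "t ^ card (I \<union> J) * wt S a P \<delta> (I \<union> J) = cI S a P I * t ^ card I * (\<Prod>j\<in>J. t * s j)"
        unfolding e3 unfolding wt_def e1 e2 s_def by (simp add: power_add mult_ac)
    qed
  qed
  also have "\<dots> = (\<Sum>I\<in>Pow {1..a}. cI S a P I * t ^ card I * (\<Prod>j\<in>R. 1 + t * s j))"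
    by (subst sum_Pow_prod) (auto simp: R_def)
  also have "\<dots> = ck S a P \<delta> (a+m) t"
    unfolding ck_def R_def s_def by simp
  finally show ?thesis .
qed

lemma sum_pairs_nonempty:
  fixes f :: "'b set \<Rightarrow> real"
  assumes "finite PP" "{} \<in> PP"
  shows "(\<Sum>G\<in>PP - {{}}. \<Sum>G'\<in>PP - {{}}. f (G \<union> G'))
       = (\<Sum>G\<in>PP. \<Sum>G'\<in>PP. f (G \<union> G')) - 2 * (\<Sum>G\<in>PP. f G) + f {}"
proof -
  let ?P0 = "PP - {{}}"
  have r: "sum h PP = h {} + sum h ?P0" for h :: "'b set \<Rightarrow> real"
    using sum.remove[OF assms] .
  have "(\<Sum>G\<in>PP. \<Sum>G'\<in>PP. f (G \<union> G')) = (\<Sum>G\<in>PP. f G + (\<Sum>G'\<in>?P0. f (G \<union> G')))"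
    by (subst r) simp
  also have "\<dots> = (\<Sum>G\<in>PP. f G) + (\<Sum>G\<in>PP. \<Sum>G'\<in>?P0. f (G \<union> G'))"
    by (simp add: sum.distrib)
  also have "(\<Sum>G\<in>PP. \<Sum>G'\<in>?P0. f (G \<union> G')) = (\<Sum>G'\<in>?P0. f G') + (\<Sum>G\<in>?P0. \<Sum>G'\<in>?P0. f (G \<union> G'))"
    by (subst r) simp
  also have "(\<Sum>G'\<in>?P0. f G') = (\<Sum>G\<in>PP. f G) - f {}" using r[of f] by simp
  finally show ?thesis by simp
qed



lemma dsum_mono:
  fixes f :: "'b \<Rightarrow> 'b \<Rightarrow> real"
  assumes "finite Y" "X \<subseteq> Y" "\<And>G G'. G \<in> Y \<Longrightarrow> G' \<in> Y \<Longrightarrow> 0 \<le> f G G'"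
  shows "(\<Sum>G\<in>X. \<Sum>G'\<in>X. f G G') \<le> (\<Sum>G\<in>Y. \<Sum>G'\<in>Y. f G G')"
proof -
  have "(\<Sum>G\<in>X. \<Sum>G'\<in>X. f G G') \<le> (\<Sum>G\<in>X. \<Sum>G'\<in>Y. f G G')"
    using assms by (intro sum_mono sum_mono2) auto
  also have "\<dots> \<le> (\<Sum>G\<in>Y. \<Sum>G'\<in>Y. f G G')"
    using assms by (intro sum_mono2 sum_nonneg) auto
  finally show ?thesis .
qed

context
  fixes S :: "nat \<Rightarrow> 'a set" and A :: "nat set \<Rightarrow> nat \<Rightarrow> 'a" and Fs :: "nat set set"
    and n a :: nat and P :: "(nat \<Rightarrow> 'a) \<Rightarrow> real" and \<delta> :: "nat \<Rightarrow> real"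
  assumes S_fin: "\<forall>i\<in>{1..n}. finite (S i) \<and> card (S i) \<ge> 2"
    and a_le: "a \<le> n"
    and P_nonneg: "\<forall>x\<in>Qk S a. P x \<ge> 0"
    and P_sum: "(\<Sum>x\<in>Qk S a. P x) = 1"
    and delta: "\<forall>j\<in>{a+1..n}. 0 \<le> \<delta> j \<and> \<delta> j \<le> 1/2"
begin

lemmas L1' = L1[OF S_fin a_le P_nonneg P_sum delta]
lemmas Pm_nonneg' = Pm_nonneg[OF S_fin a_le P_nonneg P_sum delta]
lemmas wt_nonneg' = wt_nonneg[OF S_fin a_le P_nonneg P_sum delta]
lemmas wt_empty' = wt_empty[OF S_fin a_le P_nonneg P_sum delta]

lemma main:
  assumes k: "a < k" "k \<le> n"
  shows "M1 S A Fs a P \<delta> k \<le> ck S a P \<delta> (k - 1) 1 / real (card (S k))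
       \<and> M2 S A Fs a P \<delta> k \<le> ck S a P \<delta> (k - 1) 3 / real (card (S k))^2
       \<and> ((\<forall>j\<in>{1..n}. card (S j) \<ge> 3) \<and> (\<forall>F\<in>Nk Fs k. card F \<noteq> 1) \<longrightarrow>
           M2 S A Fs a P \<delta> k \<le> (ck S a P \<delta> (k - 1) 3 - 2 * ck S a P \<delta> (k - 1) 1 + 1)
                                  / real (card (S k))^2)"
proof -
  define m where "m = k - 1 - a"
  have km: "k = Suc (a+m)" using k(1) by (simp add: m_def)
  have le: "a + Suc m \<le> n" "a + m \<le> n" using k km by auto
  define N where "N = Nk Fs k"
  define c where "c = real (card (S k))"
  define Pm where "Pm = Pmeas S A Fs a P \<delta> m"
  define T where "T = {1..a+m}"
  define ind where "ind F x = (if \<forall>i\<in>F-{k}. x i = A F i then 1 else 0 :: real)" for F and x :: "nat \<Rightarrow> 'a"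
  define w where "w = wt S a P \<delta>"
  have finSk: "finite (S k)" and c2: "c \<ge> 2" using S_fin k by (auto simp: c_def)
  have finQ: "finite (Qk S (a+m))" using S_fin le by (intro finite_Qk) auto
  have NF: "k \<in> F \<and> F - {k} \<subseteq> T" if "F \<in> N" for F
  proof -
    have "F \<subseteq> {1..Suc (a+m)}" "\<not> F \<subseteq> {1..a+m}" using that unfolding N_def Nk_def Fk_def km by auto
    then show ?thesis unfolding T_def km by (auto simp: subset_iff le_Suc_eq)
  qed
  have finN: "finite N"
  proof (rule finite_subset)
    show "N \<subseteq> Pow {1..k}" unfolding N_def Nk_def Fk_def by auto
  qed auto
  have inj: "inj_on (\<lambda>F. F - {k}) N"
  proof (rule inj_onI)
    fix F F' assume "F \<in> N" "F' \<in> N" "F - {k} = F' - {k}"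
    then show "F = F'" using NF by (metis insert_Diff)
  qed
  define N' where "N' = (\<lambda>F. F - {k}) ` N"
  have N'T: "N' \<subseteq> Pow T" using NF by (auto simp: N'_def)
  have finT: "finite (Pow T)" by (simp add: T_def)
  have wnn: "G \<in> Pow T \<Longrightarrow> 0 \<le> w G" for G unfolding w_def using le by (intro wt_nonneg') (auto simp: T_def)
  have Pmnn: "x \<in> Qk S (a+m) \<Longrightarrow> 0 \<le> Pm x" for x unfolding Pm_def using Pm_nonneg'[OF le(2)] by blast
  have M1eq: "M1 S A Fs a P \<delta> k = (\<Sum>x\<in>Qk S (a+m). Pm x * alpha S A Fs k x)"
    unfolding M1_def Pk_def Pm_def km by simp
  have M2eq: "M2 S A Fs a P \<delta> k = (\<Sum>x\<in>Qk S (a+m). Pm x * (alpha S A Fs k x)^2)"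
    unfolding M2_def Pk_def Pm_def km by simp
  have km1: "k - 1 = a + m" using km by simp
  have al: "0 \<le> alpha S A Fs k x \<and> alpha S A Fs k x \<le> (\<Sum>F\<in>N. ind F x) / c" for x
  proof -
    let ?Y = "{y \<in> S k. x(k := y) \<in> Bk S A Fs k}"
    let ?N1 = "{F \<in> N. \<forall>i\<in>F-{k}. x i = A F i}"
    have sub: "?Y \<subseteq> (\<lambda>F. A F k) ` ?N1"
    proof
      fix y assume "y \<in> ?Y"
      then obtain F where F: "F \<in> N" "inHyp A F (x(k:=y))" unfolding Bk_def N_def by auto
      have "k \<in> F" using NF[OF F(1)] by auto
      then have "y = A F k" using F(2) unfolding inHyp_def by (metis fun_upd_same)
      moreover have "\<forall>i\<in>F-{k}. x i = A F i" using F(2) unfolding inHyp_def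
        by (metis DiffD1 DiffD2 fun_upd_other singletonI)
      ultimately show "y \<in> (\<lambda>F. A F k) ` ?N1" using F(1) by blast
    qed
    have "card ?Y \<le> card ((\<lambda>F. A F k) ` ?N1)"
      by (rule card_mono[OF _ sub]) (use finN in auto)
    also have "\<dots> \<le> card ?N1" by (rule card_image_le) (use finN in auto)
    finally have cY: "real (card ?Y) \<le> real (card ?N1)" by simp
    have sN: "(\<Sum>F\<in>N. ind F x) = real (card ?N1)"
      using sum.inter_filter[OF finN, of "\<lambda>_. 1::real" "\<lambda>F. \<forall>i\<in>F-{k}. x i = A F i"]
      by (simp add: ind_def)
    have "alpha S A Fs k x = real (card ?Y) / c" unfolding alpha_def c_def by simp
    then show ?thesis using cY sN c2 by (auto intro: divide_right_mono)
  qed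
  have B1: "(\<Sum>x\<in>Qk S (a+m). Pm x * ind F x) \<le> w (F - {k})" if F: "F \<in> N" for F
  proof -
    have "(\<Sum>x\<in>Qk S (a+m). Pm x * ind F x) = (\<Sum>x\<in>{x\<in>Qk S (a+m). \<forall>i\<in>F-{k}. x i = A F i}. Pm x)"
      by (subst sum.inter_filter[OF finQ]) (auto simp: ind_def intro!: sum.cong)
    also have "\<dots> \<le> w (F - {k})"
      unfolding Pm_def w_def using NF[OF F] by (intro L1'[OF le(2)]) (auto simp: T_def)
    finally show ?thesis .
  qed
  have B2: "(\<Sum>x\<in>Qk S (a+m). Pm x * (ind F x * ind F' x)) \<le> w ((F - {k}) \<union> (F' - {k}))"
    if F: "F \<in> N" "F' \<in> N" for F F'
  proof -
    define vv where "vv i = (if i \<in> F - {k} then A F i else A F' i)" for i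
    let ?G = "(F - {k}) \<union> (F' - {k})"
    have "(\<Sum>x\<in>Qk S (a+m). Pm x * (ind F x * ind F' x))
        \<le> (\<Sum>x\<in>Qk S (a+m). Pm x * (if \<forall>i\<in>?G. x i = vv i then 1 else 0))"
    proof (rule sum_mono, rule mult_left_mono)
      fix x show "ind F x * ind F' x \<le> (if \<forall>i\<in>?G. x i = vv i then 1 else 0)"
        unfolding ind_def vv_def by auto
    qed (use Pmnn in auto)
    also have "\<dots> = (\<Sum>x\<in>{x\<in>Qk S (a+m). \<forall>i\<in>?G. x i = vv i}. Pm x)"
      by (subst sum.inter_filter[OF finQ]) (auto intro!: sum.cong)
    also have "\<dots> \<le> w ?G"
      unfolding Pm_def w_def using NF[OF F(1)] NF[OF F(2)] by (intro L1'[OF le(2)]) (auto simp: T_def)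
    finally show ?thesis .
  qed
  have "M1 S A Fs a P \<delta> k \<le> (\<Sum>x\<in>Qk S (a+m). Pm x * ((\<Sum>F\<in>N. ind F x) / c))"
    unfolding M1eq using al Pmnn by (intro sum_mono mult_left_mono) auto
  also have "\<dots> = (\<Sum>x\<in>Qk S (a+m). \<Sum>F\<in>N. Pm x * ind F x) / c"
    by (simp add: sum_divide_distrib sum_distrib_left)
  also have "\<dots> = (\<Sum>F\<in>N. \<Sum>x\<in>Qk S (a+m). Pm x * ind F x) / c"
    by (subst sum.swap) (rule refl)
  also have "\<dots> \<le> (\<Sum>F\<in>N. w (F - {k})) / c"
    using c2 B1 by (intro divide_right_mono sum_mono) auto
  also have "(\<Sum>F\<in>N. w (F - {k})) = (\<Sum>G\<in>N'. w G)"
    unfolding N'_def by (rule sum.reindex[OF inj, symmetric, unfolded comp_def])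
  also have "\<dots> \<le> (\<Sum>G\<in>Pow T. w G)"
    using N'T wnn finT by (intro sum_mono2) auto
  also have "\<dots> = ck S a P \<delta> (k - 1) 1"
    using ck_eq[where a=a and m=m and t=1 and S=S and P=P and \<delta>=\<delta>] unfolding km1 w_def T_def by simp
  finally have res1: "M1 S A Fs a P \<delta> k \<le> ck S a P \<delta> (k - 1) 1 / real (card (S k))"
    using c2 by (simp add: c_def divide_right_mono)
  have "M2 S A Fs a P \<delta> k \<le> (\<Sum>x\<in>Qk S (a+m). Pm x * ((\<Sum>F\<in>N. ind F x) / c)^2)"
    unfolding M2eq using al Pmnn by (intro sum_mono mult_left_mono power_mono) auto
  also have "\<dots> = (\<Sum>x\<in>Qk S (a+m). Pm x * (\<Sum>F\<in>N. \<Sum>F'\<in>N. ind F x * ind F' x) / c^2)"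
    by (intro sum.cong refl) (simp add: power_divide power2_eq_square sum_product)
  also have "\<dots> = (\<Sum>x\<in>Qk S (a+m). \<Sum>F\<in>N. \<Sum>F'\<in>N. Pm x * (ind F x * ind F' x)) / c^2"
    by (simp add: sum_divide_distrib sum_distrib_left)
  also have "\<dots> = (\<Sum>F\<in>N. \<Sum>x\<in>Qk S (a+m). \<Sum>F'\<in>N. Pm x * (ind F x * ind F' x)) / c^2"
    by (subst sum.swap) (rule refl)
  also have "\<dots> = (\<Sum>F\<in>N. \<Sum>F'\<in>N. \<Sum>x\<in>Qk S (a+m). Pm x * (ind F x * ind F' x)) / c^2"
    by (intro arg_cong[where f="\<lambda>z. z / c^2"] sum.cong refl) (rule sum.swap)
  also have "\<dots> \<le> (\<Sum>F\<in>N. \<Sum>F'\<in>N. w ((F - {k}) \<union> (F' - {k}))) / c^2"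
    using c2 B2 by (intro divide_right_mono sum_mono) auto
  also have "(\<Sum>F\<in>N. \<Sum>F'\<in>N. w ((F - {k}) \<union> (F' - {k}))) = (\<Sum>G\<in>N'. \<Sum>G'\<in>N'. w (G \<union> G'))"
    unfolding N'_def by (simp add: sum.reindex[OF inj])
  finally have M2b: "M2 S A Fs a P \<delta> k \<le> (\<Sum>G\<in>N'. \<Sum>G'\<in>N'. w (G \<union> G')) / c^2" .
  have wnn2: "G \<in> Pow T \<Longrightarrow> G' \<in> Pow T \<Longrightarrow> 0 \<le> w (G \<union> G')" for G G' using wnn by auto
  have dd: "(\<Sum>G\<in>Pow T. \<Sum>G'\<in>Pow T. w (G \<union> G')) = ck S a P \<delta> (k - 1) 3"
    using sum_pairs_Pow[of T w] ck_eq[where a=a and m=m and t=3 and S=S and P=P and \<delta>=\<delta>] unfolding km1 w_def T_def by simp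
  have "(\<Sum>G\<in>N'. \<Sum>G'\<in>N'. w (G \<union> G')) \<le> (\<Sum>G\<in>Pow T. \<Sum>G'\<in>Pow T. w (G \<union> G'))"
    by (rule dsum_mono[OF finT N'T wnn2])
  then have res2: "M2 S A Fs a P \<delta> k \<le> ck S a P \<delta> (k - 1) 3 / real (card (S k))^2"
    using M2b dd c2 unfolding c_def by (smt (verit) divide_right_mono zero_le_power2)
  have res3: "M2 S A Fs a P \<delta> k \<le> (ck S a P \<delta> (k - 1) 3 - 2 * ck S a P \<delta> (k - 1) 1 + 1) / real (card (S k))^2"
    if H: "\<forall>F\<in>Nk Fs k. card F \<noteq> 1"
  proof -
    have "{} \<notin> N'"
    proof
      assume "{} \<in> N'"
      then obtain F where F: "F \<in> N" "F - {k} = {}" by (auto simp: N'_def)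
      then have "F = {k}" using NF[OF F(1)] by auto
      then show False using H F(1) by (auto simp: N_def)
    qed
    then have sub: "N' \<subseteq> Pow T - {{}}" using N'T by auto
    have "(\<Sum>G\<in>N'. \<Sum>G'\<in>N'. w (G \<union> G')) \<le> (\<Sum>G\<in>Pow T - {{}}. \<Sum>G'\<in>Pow T - {{}}. w (G \<union> G'))"
      by (rule dsum_mono[OF _ sub]) (use finT wnn2 in auto)
    also have "\<dots> = (\<Sum>G\<in>Pow T. \<Sum>G'\<in>Pow T. w (G \<union> G')) - 2 * (\<Sum>G\<in>Pow T. w G) + w {}"
      by (rule sum_pairs_nonempty) (use finT in auto)
    also have "\<dots> = ck S a P \<delta> (k - 1) 3 - 2 * ck S a P \<delta> (k - 1) 1 + 1"
      using dd ck_eq[where a=a and m=m and t=1 and S=S and P=P and \<delta>=\<delta>] wt_empty' unfolding km1 w_def T_def by simp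
    finally show ?thesis
      using M2b c2 unfolding c_def by (smt (verit) divide_right_mono zero_le_power2)
  qed
  show ?thesis using res1 res2 res3 by blast
qed

end

theorem theorem3p2:
  fixes S :: "nat \<Rightarrow> 'a set" and A :: "nat set \<Rightarrow> nat \<Rightarrow> 'a" and Fs :: "nat set set"
    and n a k :: nat and P :: "(nat \<Rightarrow> 'a) \<Rightarrow> real" and \<delta> :: "nat \<Rightarrow> real"
  assumes S_fin: "\<forall>i\<in>{1..n}. finite (S i) \<and> card (S i) \<ge> 2"
    and hyps: "\<forall>F\<in>Fs. F \<noteq> {} \<and> F \<subseteq> {1..n} \<and> (\<forall>i\<in>F. A F i \<in> S i)"
    and a_le: "a \<le> n"
    and P_nonneg: "\<forall>x\<in>Qk S a. P x \<ge> 0"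
    and P_sum: "(\<Sum>x\<in>Qk S a. P x) = 1"
    and delta: "\<forall>j\<in>{a+1..n}. 0 \<le> \<delta> j \<and> \<delta> j \<le> 1/2"
    and k: "a < k" "k \<le> n"
  shows "M1 S A Fs a P \<delta> k \<le> ck S a P \<delta> (k - 1) 1 / real (card (S k))
       \<and> M2 S A Fs a P \<delta> k \<le> ck S a P \<delta> (k - 1) 3 / real (card (S k))^2
       \<and> ((\<forall>j\<in>{1..n}. card (S j) \<ge> 3) \<and> (\<forall>F\<in>Nk Fs k. card F \<noteq> 1) \<longrightarrow>
           M2 S A Fs a P \<delta> k \<le> (ck S a P \<delta> (k - 1) 3 - 2 * ck S a P \<delta> (k - 1) 1 + 1)
                                  / real (card (S k))^2)"
    by (rule main[OF S_fin a_le P_nonneg P_sum delta k(1) k(2)])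

end
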